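(* Let $\mathcal A=(S,R)$ be a finitary argumentation network ($S\neq\varnothing$, $R\subseteq S\times S$, each element has finitely many attackers) and let $\Delta_{\mathcal A}$ be the $\mathbf{CN}$-theory $$\Delta_{\mathcal A}=\{x\mid x\in S \text{ unattacked}\}\cup\{y\leftrightarrow \textstyle\bigwedge_{zRy}Nz\mid y\in S\}\cup\{z\to Ny\mid zRy\}\cup\{(\textstyle\bigwedge_{zRy}\neg z)\wedge(\bigvee_{zRy}\neg Nz)\to \neg y\wedge\neg Ny\mid y\in S\}.$$ Then $\Delta_{\mathcal A}$ is $\mathbf{CN}$-consistent.
   Context: The logic $\mathbf{CN}$: the elements of $S$ are basic atoms; atomic formulas are $q$ and $Nq$ for basic atoms $q$; formulas are built with classical connectives; $\Delta\vdash_{\mathbf{CN}}A$ iff $\Delta\cup\{Nq\to\neg q\mid q\text{ basic atom}\}\vdash A$ in classical propositional logic (treating each $q$ and $Nq$ as distinct classical atoms). Consistency means $\Delta_{\mathcal A}\nvdash_{\mathbf{CN}}\bot$. Empty conjunctions are $\top$, empty disjunctions are $\bot$. *)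

theory Defs
  imports Main
begin

datatype 'a fm =
    Atom 'a
  | NAtom 'a
  | FTrue
  | FFalse
  | FNot "'a fm"
  | FAnd "'a fm" "'a fm"
  | FOr "'a fm" "'a fm"
  | FImp "'a fm" "'a fm"
  | FIff "'a fm" "'a fm"

text \<open>Classical valuation: q and N q are independent classical atoms.\<close>
fun eval :: "('a \<Rightarrow> bool) \<Rightarrow> ('a \<Rightarrow> bool) \<Rightarrow> 'a fm \<Rightarrow> bool" where
  "eval v w (Atom q) = v q"
| "eval v w (NAtom q) = w q"
| "eval v w FTrue = True"
| "eval v w FFalse = False"
| "eval v w (FNot A) = (\<not> eval v w A)"
| "eval v w (FAnd A B) = (eval v w A \<and> eval v w B)"
| "eval v w (FOr A B) = (eval v w A \<or> eval v w B)"
| "eval v w (FImp A B) = (eval v w A \<longrightarrow> eval v w B)"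
| "eval v w (FIff A B) = (eval v w A \<longleftrightarrow> eval v w B)"

definition tautology :: "'a fm \<Rightarrow> bool" where
  "tautology A \<longleftrightarrow> (\<forall>v w. eval v w A)"

inductive cpl_derives :: "'a fm set \<Rightarrow> 'a fm \<Rightarrow> bool" where
  hyp: "A \<in> \<Gamma> \<Longrightarrow> cpl_derives \<Gamma> A"
| taut: "tautology A \<Longrightarrow> cpl_derives \<Gamma> A"
| mp: "cpl_derives \<Gamma> (FImp A B) \<Longrightarrow> cpl_derives \<Gamma> A \<Longrightarrow> cpl_derives \<Gamma> B"

definition CN_axioms :: "'a set \<Rightarrow> 'a fm set" where
  "CN_axioms S = {FImp (NAtom q) (FNot (Atom q)) | q. q \<in> S}"

definition CN_derives :: "'a set \<Rightarrow> 'a fm set \<Rightarrow> 'a fm \<Rightarrow> bool" where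
  "CN_derives S \<Delta> A \<longleftrightarrow> cpl_derives (\<Delta> \<union> CN_axioms S) A"

definition CN_consistent :: "'a set \<Rightarrow> 'a fm set \<Rightarrow> bool" where
  "CN_consistent S \<Delta> \<longleftrightarrow> \<not> CN_derives S \<Delta> FFalse"

fun conjs :: "'a fm list \<Rightarrow> 'a fm" where
  "conjs [] = FTrue"
| "conjs (A # As) = FAnd A (conjs As)"

fun disjs :: "'a fm list \<Rightarrow> 'a fm" where
  "disjs [] = FFalse"
| "disjs (A # As) = FOr A (disjs As)"

text \<open>Some enumeration of a finite set (the order is irrelevant).\<close>
definition enum_set :: "'b set \<Rightarrow> 'b list" where
  "enum_set A = (SOME xs. set xs = A \<and> distinct xs)"

definition attackers :: "('a \<times> 'a) set \<Rightarrow> 'a \<Rightarrow> 'a set" where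
  "attackers R y = {z. (z, y) \<in> R}"

definition finitary_network :: "'a set \<Rightarrow> ('a \<times> 'a) set \<Rightarrow> bool" where
  "finitary_network S R \<longleftrightarrow> S \<noteq> {} \<and> R \<subseteq> S \<times> S \<and> (\<forall>y\<in>S. finite (attackers R y))"

definition Delta :: "'a set \<Rightarrow> ('a \<times> 'a) set \<Rightarrow> 'a fm set" where
  "Delta S R =
     {Atom x | x. x \<in> S \<and> attackers R x = {}}
   \<union> {FIff (Atom y) (conjs (map NAtom (enum_set (attackers R y)))) | y. y \<in> S}
   \<union> {FImp (Atom z) (NAtom y) | z y. (z, y) \<in> R}
   \<union> {FImp (FAnd (conjs (map (\<lambda>z. FNot (Atom z)) (enum_set (attackers R y))))
                 (disjs (map (\<lambda>z. FNot (NAtom z)) (enum_set (attackers R y)))))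
           (FAnd (FNot (Atom y)) (FNot (NAtom y))) | y. y \<in> S}"

end

theory Submission
  imports Defs
begin

lemma sound: "cpl_derives \<Gamma> A \<Longrightarrow> (\<forall>B\<in>\<Gamma>. eval v w B) \<Longrightarrow> eval v w A"
  by (induction rule: cpl_derives.induct) (auto simp: tautology_def)

lemma enum_set_ok: "finite A \<Longrightarrow> set (enum_set A) = A"
  unfolding enum_set_def
  by (rule someI2_ex[where P="\<lambda>xs. set xs = A \<and> distinct xs"])
     (auto dest: finite_distinct_list)

lemma eval_conjs: "eval v w (conjs xs) = (\<forall>x\<in>set xs. eval v w x)"
  by (induction xs) auto

lemma eval_disjs: "eval v w (disjs xs) = (\<exists>x\<in>set xs. eval v w x)"
  by (induction xs) auto

definition FF :: "('a \<times> 'a) set \<Rightarrow> 'a set \<Rightarrow> 'a set" where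
  "FF R E = {y. \<forall>z. (z,y)\<in>R \<longrightarrow> (\<exists>c\<in>E. (c,z)\<in>R)}"

lemma FF_iff: "y \<in> FF R E \<longleftrightarrow> (\<forall>z. (z,y)\<in>R \<longrightarrow> (\<exists>c\<in>E. (c,z)\<in>R))"
  unfolding FF_def by simp

lemma mono_FF: "mono (FF R)"
  unfolding mono_def FF_def by blast

lemma G_fix: "lfp (FF R) = FF R (lfp (FF R))"
  by (rule lfp_unfold[OF mono_FF])

lemma G_cf: "lfp (FF R) \<subseteq> {y. \<forall>z\<in>lfp (FF R). (z,y)\<notin>R}"
proof (rule lfp_induct[OF mono_FF])
  show "FF R (inf (lfp (FF R)) {y. \<forall>z\<in>lfp (FF R). (z,y)\<notin>R}) \<subseteq> {y. \<forall>z\<in>lfp (FF R). (z,y)\<notin>R}"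
  proof
    fix y assume y: "y \<in> FF R (inf (lfp (FF R)) {y. \<forall>z\<in>lfp (FF R). (z,y)\<notin>R})"
    show "y \<in> {y. \<forall>z\<in>lfp (FF R). (z,y)\<notin>R}"
    proof (clarify)
      fix z assume z: "z \<in> lfp (FF R)" "(z,y)\<in>R"
      then obtain c where c: "c \<in> lfp (FF R)" "\<forall>d\<in>lfp (FF R). (d,c)\<notin>R" "(c,z)\<in>R"
        using y z(2) unfolding FF_iff by blast
      have "z \<in> FF R (lfp (FF R))" by (rule subsetD[OF equalityD1[OF G_fix] z(1)])
      then obtain d where "d \<in> lfp (FF R)" "(d,c)\<in>R" using c(3) unfolding FF_iff by blast
      with c(2) show False by blast
    qed
  qed
qed

theorem corollary6:
  fixes S :: "'a set" and R :: "('a \<times> 'a) set"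
  assumes "finitary_network S R"
  shows "CN_consistent S (Delta S R)"
proof -
  define G where "G = lfp (FF R)"
  define v where "v = (\<lambda>y. y \<in> G)"
  define w where "w = (\<lambda>y. \<exists>c\<in>G. (c,y)\<in>R)"
  have fin: "\<And>y. y \<in> S \<Longrightarrow> set (enum_set (attackers R y)) = attackers R y"
    using assms unfolding finitary_network_def by (simp add: enum_set_ok)
  have fix': "\<And>y. v y \<longleftrightarrow> (\<forall>z. (z,y)\<in>R \<longrightarrow> w z)"
    unfolding v_def w_def G_def by (subst G_fix) (simp only: FF_iff)
  have cf: "\<not> v y" if wy: "w y" for y
  proof
    obtain c where c: "c \<in> G" "(c,y) \<in> R" using wy by (auto simp: w_def)
    assume "v y" then have "y \<in> G" by (simp add: v_def)
    then have "y \<in> {y. \<forall>z\<in>G. (z,y)\<notin>R}" unfolding G_def by (rule subsetD[OF G_cf])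
    with c show False by simp
  qed
  have all: "\<forall>B\<in>Delta S R \<union> CN_axioms S. eval v w B"
  proof
    fix B assume "B \<in> Delta S R \<union> CN_axioms S"
    then consider (a) x where "B = Atom x" "x \<in> S" "attackers R x = {}"
      | (b) y where "B = FIff (Atom y) (conjs (map NAtom (enum_set (attackers R y))))" "y \<in> S"
      | (c) z y where "B = FImp (Atom z) (NAtom y)" "(z, y) \<in> R"
      | (d) y where "B = FImp (FAnd (conjs (map (\<lambda>z. FNot (Atom z)) (enum_set (attackers R y))))
                 (disjs (map (\<lambda>z. FNot (NAtom z)) (enum_set (attackers R y)))))
           (FAnd (FNot (Atom y)) (FNot (NAtom y)))" "y \<in> S"
      | (e) q where "B = FImp (NAtom q) (FNot (Atom q))"
      unfolding Delta_def CN_axioms_def Un_iff mem_Collect_eq by (elim disjE exE conjE; blast)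
    then show "eval v w B"
    proof cases
      case a then show ?thesis using fix' by (auto simp: attackers_def)
    next
      case b then show ?thesis using fix' fin[of y] by (auto simp: eval_conjs attackers_def)
    next
      case c then show ?thesis by (auto simp: v_def w_def)
    next
      case d
      have "\<not> v y" if "\<not> w z0" "z0 \<in> attackers R y" for z0
        using that fix' by (auto simp: attackers_def)
      moreover have "\<not> w y" if "\<forall>z\<in>attackers R y. \<not> v z"
        using that by (auto simp: attackers_def w_def v_def)
      ultimately show ?thesis using d fin[of y] by (auto simp: eval_conjs eval_disjs)
    next
      case e then show ?thesis using cf by auto
    qed
  qed
  show ?thesis
    unfolding CN_consistent_def CN_derives_def
    using sound[OF _ all] by fastforce
qed

end
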